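(* Let $\mathcal F$ be a proper filter on $\omega$ and consider the game $\mathfrak G(\mathrm{Fr},\omega,\mathcal F^+)$. Then (1) player I has a winning strategy if and only if $\mathcal F$ is not a weak Q-filter; (2) player II has a winning strategy if and only if $\mathcal F$ is $\omega$-diagonalizable.
   Context: A filter on $\omega$ is a family $\mathcal F\subseteq\mathcal P(\omega)$ closed under finite intersections and supersets and containing all cofinite sets; it is proper if all its members are infinite. $\mathcal F^+=\{X\subseteq\omega:\omega\setminus X\notin\mathcal F\}$. $\mathrm{Fr}$ is the family of cofinite subsets of $\omega$. $X\subseteq^*Y$ means $X\setminus Y$ is finite. Game $\mathfrak G(\mathcal X,\omega,\mathcal Z)$ (for $\mathcal X,\mathcal Z\subseteq\mathcal P(\omega)$): at each stage $k\in\omega$, player I chooses $X_k\in\mathcal X$ and player II responds with $n_k\in X_k$; II wins the play if $\{n_k:k\in\omega\}\in\mathcal Z$, otherwise I wins. $\mathcal F$ is a weak Q-filter if for every partition of $\omega$ into finite sets $\langle s_k:k\in\omega\rangle$ there is $X\in\mathcal F^+$ with $|X\cap s_k|\le1$ for all $k$. $\mathcal F$ is $\omega$-diagonalizable if there are infinite sets $X_n\subseteq\omega$ ($n\in\omega$) such that for every $Y\in\mathcal F$ there is $n$ with $X_n\subseteq^*Y$. *)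

theory Defs
  imports Main
begin

definition Fr :: "nat set set" where
  "Fr = {X. finite (- X)}"

definition is_filter :: "nat set set \<Rightarrow> bool" where
  "is_filter F \<longleftrightarrow>
     (\<forall>X\<in>F. \<forall>Y\<in>F. X \<inter> Y \<in> F) \<and>
     (\<forall>X Y. X \<in> F \<and> X \<subseteq> Y \<longrightarrow> Y \<in> F) \<and>
     Fr \<subseteq> F"

definition proper_filter :: "nat set set \<Rightarrow> bool" where
  "proper_filter F \<longleftrightarrow> is_filter F \<and> (\<forall>X\<in>F. infinite X)"

definition positive_sets :: "nat set set \<Rightarrow> nat set set" where
  "positive_sets F = {X. - X \<notin> F}"

text \<open>Game G(Xs, omega, Z): at stage k player I plays X_k in Xs, player II answers n_k in X_k;
  II wins iff {n_k | k} is in Z.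
  A strategy for I maps the finite sequence of II's previous moves to I's next move.
  A strategy for II maps the nonempty finite sequence of I's moves so far to II's answer.\<close>

definition I_strategy :: "nat set set \<Rightarrow> (nat list \<Rightarrow> nat set) \<Rightarrow> bool" where
  "I_strategy XX \<sigma> \<longleftrightarrow> (\<forall>s. \<sigma> s \<in> XX)"

definition I_winning :: "nat set set \<Rightarrow> nat set set \<Rightarrow> (nat list \<Rightarrow> nat set) \<Rightarrow> bool" where
  "I_winning XX Z \<sigma> \<longleftrightarrow> I_strategy XX \<sigma> \<and>
     (\<forall>n :: nat \<Rightarrow> nat. (\<forall>k. n k \<in> \<sigma> (map n [0..<k])) \<longrightarrow> range n \<notin> Z)"

definition II_strategy :: "nat set set \<Rightarrow> (nat set list \<Rightarrow> nat) \<Rightarrow> bool" where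
  "II_strategy XX \<tau> \<longleftrightarrow> (\<forall>xs. xs \<noteq> [] \<and> set xs \<subseteq> XX \<longrightarrow> \<tau> xs \<in> last xs)"

definition II_winning :: "nat set set \<Rightarrow> nat set set \<Rightarrow> (nat set list \<Rightarrow> nat) \<Rightarrow> bool" where
  "II_winning XX Z \<tau> \<longleftrightarrow> II_strategy XX \<tau> \<and>
     (\<forall>X :: nat \<Rightarrow> nat set. (\<forall>k. X k \<in> XX) \<longrightarrow>
        range (\<lambda>k. \<tau> (map X [0..<Suc k])) \<in> Z)"

definition I_has_winning_strategy :: "nat set set \<Rightarrow> nat set set \<Rightarrow> bool" where
  "I_has_winning_strategy XX Z \<longleftrightarrow> (\<exists>\<sigma>. I_winning XX Z \<sigma>)"

definition II_has_winning_strategy :: "nat set set \<Rightarrow> nat set set \<Rightarrow> bool" where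
  "II_has_winning_strategy XX Z \<longleftrightarrow> (\<exists>\<tau>. II_winning XX Z \<tau>)"

definition finite_partition :: "(nat \<Rightarrow> nat set) \<Rightarrow> bool" where
  "finite_partition s \<longleftrightarrow> (\<forall>k. finite (s k) \<and> s k \<noteq> {}) \<and>
     (\<forall>k l. k \<noteq> l \<longrightarrow> s k \<inter> s l = {}) \<and> (\<Union>k. s k) = UNIV"

definition weak_Q_filter :: "nat set set \<Rightarrow> bool" where
  "weak_Q_filter F \<longleftrightarrow> (\<forall>s. finite_partition s \<longrightarrow>
     (\<exists>X\<in>positive_sets F. \<forall>k. card (X \<inter> s k) \<le> 1))"

definition omega_diagonalizable :: "nat set set \<Rightarrow> bool" where
  "omega_diagonalizable F \<longleftrightarrow> (\<exists>X :: nat \<Rightarrow> nat set. (\<forall>n. infinite (X n)) \<and>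
     (\<forall>Y\<in>F. \<exists>n. finite (X n - Y)))"

end

theory Submission
  imports Defs "HOL-Library.Infinite_Set" "HOL-Library.Nat_Bijection" "HOL-Library.Countable"
begin

lemma pos_infinite:
  assumes "proper_filter F" "X \<in> positive_sets F" shows "infinite X"
proof
  assume "finite X"
  then have "- X \<in> Fr" by (simp add: Fr_def)
  then have "- X \<in> F" using assms(1) by (auto simp: proper_filter_def is_filter_def)
  then show False using assms(2) by (simp add: positive_sets_def)
qed

lemma Fr_in: "proper_filter F \<Longrightarrow> finite (- X) \<Longrightarrow> X \<in> F"
  by (auto simp: proper_filter_def is_filter_def Fr_def)

lemma F_int: "proper_filter F \<Longrightarrow> X \<in> F \<Longrightarrow> Y \<in> F \<Longrightarrow> X \<inter> Y \<in> F"
  by (auto simp: proper_filter_def is_filter_def)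

lemma F_sup: "proper_filter F \<Longrightarrow> X \<in> F \<Longrightarrow> X \<subseteq> Y \<Longrightarrow> Y \<in> F"
  by (auto simp: proper_filter_def is_filter_def)

lemma inf_cof_ex:
  assumes "infinite (A::nat set)" "finite (- C)"
  shows "\<exists>x. x \<in> A \<and> x \<in> C \<and> L \<le> x"
proof -
  have "finite (- C \<union> {..<L})" using assms(2) by simp
  then have "infinite (A - (- C \<union> {..<L}))" using assms(1) by (metis Diff_infinite_finite)
  then obtain x where "x \<in> A - (- C \<union> {..<L})" by (metis finite.emptyI ex_in_conv)
  then show ?thesis by auto
qed

lemma part1a:
  assumes F: "proper_filter F" and nq: "\<not> weak_Q_filter F"
  shows "I_has_winning_strategy Fr (positive_sets F)"
proof -
  obtain s where sp: "finite_partition s"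
    and bad: "\<And>X. X \<in> positive_sets F \<Longrightarrow> \<exists>k. \<not> card (X \<inter> s k) \<le> 1"
    using nq unfolding weak_Q_filter_def by blast
  have fin: "\<And>k. finite (s k)" and disj: "\<And>k l. k \<noteq> l \<Longrightarrow> s k \<inter> s l = {}"
    and cov: "(\<Union>k. s k) = UNIV" using sp by (auto simp: finite_partition_def)
  define B where "B x = \<Union>{s k |k. x \<in> s k}" for x
  have Bfin: "finite (B x)" for x
  proof -
    obtain k0 where k0: "x \<in> s k0" using cov by blast
    have "{s k |k. x \<in> s k} = {s k0}"
    proof (intro equalityI subsetI)
      fix S assume "S \<in> {s k |k. x \<in> s k}"
      then obtain k where "S = s k" "x \<in> s k" by blast
      then have "k = k0" using k0 disj[of k k0] by (cases "k = k0") auto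
      then show "S \<in> {s k0}" using \<open>S = s k\<close> by simp
    qed (use k0 in auto)
    then show ?thesis using fin by (simp add: B_def)
  qed
  define \<sigma> where "\<sigma> l = - (\<Union>x\<in>set l. B x)" for l
  have "I_winning Fr (positive_sets F) \<sigma>"
    unfolding I_winning_def I_strategy_def
  proof (intro conjI allI impI)
    fix l show "\<sigma> l \<in> Fr" using Bfin by (simp add: \<sigma>_def Fr_def)
  next
    fix n :: "nat \<Rightarrow> nat" assume play: "\<forall>k. n k \<in> \<sigma> (map n [0..<k])"
    show "range n \<notin> positive_sets F"
    proof
      assume "range n \<in> positive_sets F"
      then obtain k where ck: "\<not> card (range n \<inter> s k) \<le> 1" using bad by blast
      have "finite (range n \<inter> s k)" using fin[of k] by simp
      then have "\<not> (\<forall>a1 \<in> range n \<inter> s k. \<forall>a2 \<in> range n \<inter> s k. a1 = a2)"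
        using card_le_Suc0_iff_eq ck by (metis One_nat_def)
      then obtain a b where ab: "a \<in> range n \<inter> s k" "b \<in> range n \<inter> s k" "a \<noteq> b"
        by blast
      then obtain i j where ij: "n i \<in> s k" "n j \<in> s k" "i \<noteq> j"
        by (metis IntD1 IntD2 rangeE)
      have gen: False if "i' < j'" "n i' \<in> s k" "n j' \<in> s k" for i' j'
      proof -
        have "n i' \<in> set (map n [0..<j'])" using that by auto
        moreover have "n j' \<in> B (n i')" using that by (auto simp: B_def)
        ultimately have "n j' \<notin> \<sigma> (map n [0..<j'])" by (auto simp: \<sigma>_def)
        then show False using play by blast
      qed
      show False
      proof (cases "i < j")
        case True then show ?thesis using gen ij by blast
      next
        case False then have "j < i" using ij by simp
        then show ?thesis using gen ij by blast
      qed
    qed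
  qed
  then show ?thesis by (auto simp: I_has_winning_strategy_def)
qed

definition bnd :: "nat set \<Rightarrow> nat" where
  "bnd C = (LEAST N. \<forall>x\<ge>N. x \<in> C)"

lemma bnd_prop:
  assumes "finite (- C)" "bnd C \<le> x" shows "x \<in> C"
proof -
  obtain k where "- C \<subseteq> {..<k}" using finite_nat_bounded[OF assms(1)] by blast
  then have "\<forall>x\<ge>k. x \<in> C" by force
  then have "\<exists>N. \<forall>x\<ge>N. x \<in> C" by blast
  then have "\<forall>x\<ge>bnd C. x \<in> C" unfolding bnd_def by (rule LeastI_ex)
  then show ?thesis using assms(2) by blast
qed

primrec mseq :: "(nat list \<Rightarrow> nat set) \<Rightarrow> nat \<Rightarrow> nat" where
  "mseq \<sigma> 0 = 0"
| "mseq \<sigma> (Suc k) = max (Suc (mseq \<sigma> k))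
     (Max (insert 0 ((\<lambda>t. bnd (\<sigma> t)) ` {t. set t \<subseteq> {..<mseq \<sigma> k} \<and> length t \<le> Suc k})))"

lemma mseq_bnd:
  assumes "set t \<subseteq> {..<mseq \<sigma> K}" "length t \<le> Suc K"
  shows "bnd (\<sigma> t) \<le> mseq \<sigma> (Suc K)"
proof -
  have "finite {t. set t \<subseteq> {..<mseq \<sigma> K} \<and> length t \<le> Suc K}"
    by (rule finite_lists_length_le) simp
  then have "bnd (\<sigma> t) \<le> Max (insert 0 ((\<lambda>t. bnd (\<sigma> t)) ` {t. set t \<subseteq> {..<mseq \<sigma> K} \<and> length t \<le> Suc K}))"
    using assms by (intro Max_ge) auto
  then show ?thesis by simp
qed

lemma mseq_mono: "strict_mono (mseq \<sigma>)"
  by (rule strict_mono_Suc_iff[THEN iffD2]) (simp add: less_max_iff_disj)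

lemma interval_ex:
  assumes "strict_mono (m::nat\<Rightarrow>nat)" "m 0 = 0"
  shows "\<exists>k. m k \<le> x \<and> x < m (Suc k)"
proof (induction x)
  case 0
  have "m 0 < m (Suc 0)" using assms(1) by (simp add: strict_mono_def)
  then show ?case using assms(2) by auto
next
  case (Suc x)
  then obtain k where k: "m k \<le> x" "x < m (Suc k)" by blast
  show ?case
  proof (cases "Suc x < m (Suc k)")
    case True then show ?thesis using k by (intro exI[of _ k]) simp
  next
    case False
    then have "Suc x = m (Suc k)" using k by simp
    moreover have "m (Suc k) < m (Suc (Suc k))" using assms(1) by (simp add: strict_mono_def)
    ultimately show ?thesis by (metis order_refl)
  qed
qed

lemma parity2: "(a::nat) \<le> b \<Longrightarrow> a \<noteq> b \<Longrightarrow> even a = even b \<Longrightarrow> a + 2 \<le> b"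
  by presburger

lemma part1b:
  assumes F: "proper_filter F" and win: "I_winning Fr (positive_sets F) \<sigma>"
  shows "\<not> weak_Q_filter F"
proof
  assume wq: "weak_Q_filter F"
  have strat: "\<And>t. finite (- \<sigma> t)" using win by (auto simp: I_winning_def I_strategy_def Fr_def)
  define m where "m = mseq \<sigma>"
  have sm: "strict_mono m" using mseq_mono by (simp add: m_def)
  have m0: "m 0 = 0" by (simp add: m_def)
  have M3: "x \<in> \<sigma> t" if "set t \<subseteq> {..<m K}" "length t \<le> Suc K" "m (Suc K) \<le> x" for t K x
    using bnd_prop[OF strat] mseq_bnd[of t \<sigma> K] that by (force simp: m_def)
  define s where "s k = {m k..<m (Suc k)}" for k
  have sp: "finite_partition s"
    unfolding finite_partition_def
  proof (intro conjI allI impI)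
    fix k show "finite (s k)" by (simp add: s_def)
    show "s k \<noteq> {}" using sm by (simp add: s_def strict_mono_def)
  next
    fix k l :: nat assume "k \<noteq> l"
    then consider "Suc k \<le> l" | "Suc l \<le> k" by linarith
    then show "s k \<inter> s l = {}"
    proof cases
      case 1 then have "m (Suc k) \<le> m l" using sm strict_mono_less_eq by blast
      then show ?thesis by (auto simp: s_def)
    next
      case 2 then have "m (Suc l) \<le> m k" using sm strict_mono_less_eq by blast
      then show ?thesis by (auto simp: s_def)
    qed
  next
    show "(\<Union>k. s k) = UNIV" using interval_ex[OF sm m0] by (auto simp: s_def)
  qed
  then obtain X where Xp: "X \<in> positive_sets F" and Xc: "\<And>k. card (X \<inter> s k) \<le> 1"
    using wq unfolding weak_Q_filter_def by blast
  define ix where "ix x = (SOME k. m k \<le> x \<and> x < m (Suc k))" for x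
  have ixp: "m (ix x) \<le> x \<and> x < m (Suc (ix x))" for x
    unfolding ix_def using interval_ex[OF sm m0, of x] by (rule someI_ex)
  have ix_mono: "ix x \<le> ix y" if "x \<le> y" for x y
  proof (rule ccontr)
    assume "\<not> ix x \<le> ix y"
    then have "Suc (ix y) \<le> ix x" by simp
    then have "m (Suc (ix y)) \<le> m (ix x)" using sm strict_mono_less_eq by blast
    then show False using ixp[of x] ixp[of y] that by linarith
  qed
  have ix_inj: "x = y" if "x \<in> X" "y \<in> X" "ix x = ix y" for x y
  proof -
    have "x \<in> X \<inter> s (ix x)" "y \<in> X \<inter> s (ix x)" using that ixp[of x] ixp[of y] by (auto simp: s_def)
    moreover have "finite (X \<inter> s (ix x))" by (simp add: s_def)
    ultimately show ?thesis using Xc[of "ix x"] card_le_Suc0_iff_eq by fastforce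
  qed
  define Xe where "Xe = {x\<in>X. even (ix x) \<and> ix x \<noteq> 0}"
  define Xo where "Xo = {x\<in>X. odd (ix x)}"
  have Xsub: "X \<subseteq> Xe \<union> Xo \<union> {..<m 1}"
  proof
    fix x assume "x \<in> X"
    moreover have "ix x = 0 \<Longrightarrow> x < m 1" using ixp[of x] by simp
    ultimately show "x \<in> Xe \<union> Xo \<union> {..<m 1}" by (auto simp: Xe_def Xo_def)
  qed
  have "Xe \<in> positive_sets F \<or> Xo \<in> positive_sets F"
  proof (rule ccontr)
    assume na: "\<not> (Xe \<in> positive_sets F \<or> Xo \<in> positive_sets F)"
    then have e: "- Xe \<in> F" and o: "- Xo \<in> F" by (simp_all add: positive_sets_def)
    have z: "- {..<m 1} \<in> F" using Fr_in[OF F] by simp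
    have "- Xe \<inter> - Xo \<inter> - {..<m 1} \<in> F" using F_int[OF F] e o z by blast
    moreover have "- Xe \<inter> - Xo \<inter> - {..<m 1} \<subseteq> - X" using Xsub by blast
    ultimately have "- X \<in> F" using F_sup[OF F] by blast
    then show False using Xp by (simp add: positive_sets_def)
  qed
  moreover have "Xe \<subseteq> X \<and> (\<forall>y\<in>Xe. ix y \<noteq> 0) \<and> (\<forall>y\<in>Xe. \<forall>z\<in>Xe. even (ix y) = even (ix z))"
    by (auto simp: Xe_def)
  moreover have "Xo \<subseteq> X \<and> (\<forall>y\<in>Xo. ix y \<noteq> 0) \<and> (\<forall>y\<in>Xo. \<forall>z\<in>Xo. even (ix y) = even (ix z))"
    by (auto simp: Xo_def intro: odd_pos)
  ultimately have "\<exists>Y. Y \<subseteq> X \<and> Y \<in> positive_sets F \<and> (\<forall>y\<in>Y. ix y \<noteq> 0) \<and> (\<forall>y\<in>Y. \<forall>z\<in>Y. even (ix y) = even (ix z))"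
    by blast
  then obtain Y where YX: "Y \<subseteq> X" and Yp: "Y \<in> positive_sets F" and Y0: "\<And>y. y \<in> Y \<Longrightarrow> ix y \<noteq> 0"
    and Ypar: "\<And>y z. y \<in> Y \<Longrightarrow> z \<in> Y \<Longrightarrow> even (ix y) = even (ix z)" by blast
  have Ygap: "ix y + 2 \<le> ix z" if "y \<in> Y" "z \<in> Y" "y < z" for y z
  proof (rule parity2)
    show "ix y \<le> ix z" using ix_mono that by simp
    show "ix y \<noteq> ix z" using ix_inj YX that by (metis less_irrefl subsetD)
    show "even (ix y) = even (ix z)" using Ypar that by blast
  qed
  have Yinf: "infinite Y" using pos_infinite[OF F Yp] .
  define n where "n = enumerate Y"
  have nY: "n k \<in> Y" for k using enumerate_in_set[OF Yinf] by (simp add: n_def)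
  have nmono: "n i < n j" if "i < j" for i j using enumerate_mono[OF that Yinf] by (simp add: n_def)
  have nstep: "ix (n j) + 2 \<le> ix (n (Suc j))" for j using Ygap nY nmono by simp
  have ixn: "j \<le> ix (n j)" for j
  proof (induction j)
    case 0 then show ?case by simp
  next
    case (Suc j) then show ?case using nstep[of j] by simp
  qed
  have play: "n k \<in> \<sigma> (map n [0..<k])" for k
  proof (cases k)
    case 0
    have "m (Suc 0) \<le> m (ix (n 0))" using Y0[OF nY[of 0]] sm strict_mono_less_eq
      by (metis Suc_leI gr0I)
    then have "m (Suc 0) \<le> n 0" using ixp[of "n 0"] by linarith
    then show ?thesis using M3[of "[]" 0 "n 0"] 0 by simp
  next
    case (Suc j)
    define K where "K = Suc (ix (n j))"
    have "set (map n [0..<Suc j]) \<subseteq> {..<m K}"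
    proof
      fix x assume "x \<in> set (map n [0..<Suc j])"
      then obtain i where i0: "i < Suc j" "x = n i" by (auto simp del: upt_Suc)
      then have i: "i \<le> j" "x = n i" by auto
      have "n i \<le> n j" using nmono[of i j] i(1) by (cases "i = j") auto
      then show "x \<in> {..<m K}" using ixp[of "n j"] i by (simp add: K_def)
    qed
    moreover have "length (map n [0..<Suc j]) \<le> Suc K" using ixn[of j] by (simp add: K_def)
    moreover have "m (Suc K) \<le> n (Suc j)"
    proof -
      have "Suc K \<le> ix (n (Suc j))" using nstep[of j] by (simp add: K_def)
      then have "m (Suc K) \<le> m (ix (n (Suc j)))" using sm strict_mono_less_eq by blast
      then show ?thesis using ixp[of "n (Suc j)"] by linarith
    qed
    ultimately show ?thesis using M3 Suc by blast
  qed
  have "range n = Y" using bij_enumerate[OF Yinf] by (simp add: n_def bij_betw_def)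
  then show False using win play Yp by (auto simp: I_winning_def)
qed

lemma part2a:
  assumes F: "proper_filter F" and od: "omega_diagonalizable F"
  shows "II_has_winning_strategy Fr (positive_sets F)"
proof -
  obtain D :: "nat \<Rightarrow> nat set" where D: "(\<forall>n. infinite (D n)) \<and> (\<forall>Y\<in>F. \<exists>n. finite (D n - Y))"
    using od unfolding omega_diagonalizable_def by (rule exE)
  have Dinf: "\<And>n. infinite (D n)" using D by simp
  have Dd: "\<And>Y. Y \<in> F \<Longrightarrow> \<exists>n. finite (D n - Y)" using D by simp
  define \<tau> where "\<tau> xs = (LEAST x. x \<in> D (fst (prod_decode (length xs - 1))) \<and> x \<in> last xs
      \<and> snd (prod_decode (length xs - 1)) \<le> x)" for xs
  have tprop: "\<tau> xs \<in> D (fst (prod_decode (length xs - 1))) \<and> \<tau> xs \<in> last xs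
      \<and> snd (prod_decode (length xs - 1)) \<le> \<tau> xs" if "finite (- last xs)" for xs
    unfolding \<tau>_def by (rule LeastI_ex) (rule inf_cof_ex[OF Dinf that])
  have "II_winning Fr (positive_sets F) \<tau>"
    unfolding II_winning_def II_strategy_def
  proof (intro conjI allI impI)
    fix xs :: "nat set list" assume "xs \<noteq> [] \<and> set xs \<subseteq> Fr"
    then have "last xs \<in> Fr" by auto
    then have "finite (- last xs)" by (simp add: Fr_def)
    then show "\<tau> xs \<in> last xs" using tprop by blast
  next
    fix X :: "nat \<Rightarrow> nat set" assume XF: "\<forall>k. X k \<in> Fr"
    define R where "R = range (\<lambda>k. \<tau> (map X [0..<Suc k]))"
    show "range (\<lambda>k. \<tau> (map X [0..<Suc k])) \<in> positive_sets F"
    proof (rule ccontr)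
      assume "range (\<lambda>k. \<tau> (map X [0..<Suc k])) \<notin> positive_sets F"
      then have "- R \<in> F" by (simp add: positive_sets_def R_def)
      then obtain n where fn: "finite (D n - - R)" using Dd by blast
      have "infinite (D n - - R)"
        unfolding infinite_nat_iff_unbounded_le
      proof
        fix i
        define k where "k = prod_encode (n, i)"
        have fl: "finite (- last (map X [0..<Suc k]))" using XF[rule_format, of k] by (simp add: Fr_def)
        have lk: "length (map X [0..<Suc k]) - 1 = k" by simp
        have pd: "prod_decode k = (n, i)" unfolding k_def by (rule prod_encode_inverse)
        from tprop[OF fl] have "\<tau> (map X [0..<Suc k]) \<in> D n \<and> i \<le> \<tau> (map X [0..<Suc k])"
          unfolding lk pd by simp
        moreover have "\<tau> (map X [0..<Suc k]) \<in> R" unfolding R_def by (rule rangeI)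
        ultimately show "\<exists>x\<ge>i. x \<in> D n - - R" by blast
      qed
      then show False using fn by blast
    qed
  qed
  then show ?thesis by (auto simp: II_has_winning_strategy_def)
qed

primrec pl :: "(nat list \<Rightarrow> nat) \<Rightarrow> nat \<Rightarrow> nat list" where
  "pl c 0 = []"
| "pl c (Suc k) = pl c k @ [c (pl c k)]"

lemma part2b:
  assumes F: "proper_filter F" and win: "II_winning Fr (positive_sets F) \<tau>"
  shows "omega_diagonalizable F"
proof -
  have strat: "\<tau> xs \<in> last xs" if "xs \<noteq> []" "set xs \<subseteq> Fr" for xs
    using win that by (auto simp: II_winning_def II_strategy_def)
  have atF: "atLeast m \<in> Fr" for m :: nat by (simp add: Fr_def Compl_atLeast)
  define A where "A t = range (\<lambda>m. \<tau> (map atLeast (t @ [m])))" for t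
  have Ain: "m \<le> \<tau> (map atLeast (t @ [m]))" for t m
    using strat[of "map atLeast (t @ [m])"] atF by auto
  have Ainf: "infinite (A t)" for t
    unfolding infinite_nat_iff_unbounded_le A_def using Ain by blast
  define D where "D n = A (from_nat n)" for n
  have "\<forall>Y\<in>F. \<exists>n. finite (D n - Y)"
  proof (rule ccontr)
    assume "\<not> ?thesis"
    then obtain Y where YF: "Y \<in> F" and nf: "\<And>n. infinite (D n - Y)" by blast
    have "\<exists>m. \<tau> (map atLeast (t @ [m])) \<notin> Y" for t
    proof -
      have "infinite (A t - Y)" using nf[of "to_nat t"] by (simp add: D_def)
      then obtain x where "x \<in> A t - Y" by (metis finite.emptyI ex_in_conv)
      then show ?thesis by (auto simp: A_def)
    qed
    then obtain c where c: "\<And>t. \<tau> (map atLeast (t @ [c t])) \<notin> Y" by metis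
    define X where "X k = atLeast (c (pl c k))" for k
    have mp: "map X [0..<k] = map atLeast (pl c k)" for k
      by (induction k) (simp_all add: X_def)
    have XF: "\<forall>k. X k \<in> Fr" using atF by (simp add: X_def)
    have "range (\<lambda>k. \<tau> (map X [0..<Suc k])) \<in> positive_sets F"
      using win XF by (auto simp: II_winning_def)
    moreover have "range (\<lambda>k. \<tau> (map X [0..<Suc k])) \<subseteq> - Y"
    proof
      fix x assume "x \<in> range (\<lambda>k. \<tau> (map X [0..<Suc k]))"
      then obtain k where "x = \<tau> (map X [0..<Suc k])" by blast
      also have "\<dots> = \<tau> (map atLeast (pl c k @ [c (pl c k)]))" using mp[of "Suc k"] by simp
      finally show "x \<in> - Y" using c by blast
    qed
    then have "- range (\<lambda>k. \<tau> (map X [0..<Suc k])) \<in> F" using F_sup[OF F YF] by blast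
    ultimately show False by (simp add: positive_sets_def)
  qed
  moreover have "\<forall>n. infinite (D n)" using Ainf by (simp add: D_def)
  ultimately show ?thesis unfolding omega_diagonalizable_def by blast
qed

theorem theorem2p2:
  assumes "proper_filter F"
  shows "(I_has_winning_strategy Fr (positive_sets F) \<longleftrightarrow> \<not> weak_Q_filter F) \<and>
         (II_has_winning_strategy Fr (positive_sets F) \<longleftrightarrow> omega_diagonalizable F)"
  using part1a[OF assms] part1b[OF assms] part2a[OF assms] part2b[OF assms]
  by (auto simp: I_has_winning_strategy_def II_has_winning_strategy_def)

end
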